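(* In the setting described in the context, suppose C(v), C(vi) and (U) hold. Then for any sequence of random variables $\{\alpha_n\}$ with $\alpha_n\xrightarrow{P}\alpha$ as $n\to\infty$, $d_H\big(D_n(\alpha_n\mid\mathbf{x}),D(\alpha\mid\mathbf{x})\big)\xrightarrow{P}0$ as $n\to\infty$.
   Context: Setting: $\mathbf{Y}$ is a random vector in $\mathbb{R}^p$ and $\mathbf{X}$ a random element of a complete separable metric space $\mathcal{C}$; $(\mathbf{X}_i,\mathbf{Y}_i)$ are i.i.d. copies; $\mu(\cdot\mid\mathbf{x})$ is the conditional distribution of $\mathbf{Y}$ given $\mathbf{X}=\mathbf{x}$ for a fixed $\mathbf{x}$, and $\mu_n(B\mid\mathbf{x})=\sum_{i=1}^nI(\mathbf{Y}_i\in B)W_{i,n}(\mathbf{x})$ with nonnegative weights summing to $1$ that are measurable functions of $\mathbf{X}_1,\dots,\mathbf{X}_n$. $\rho(\cdot\mid\mathbf{x})$ is a uniformly bounded conditional depth function associated with $\mu(\cdot\mid\mathbf{x})$, $\rho_n(\cdot\mid\mathbf{x})$ its sample version defined from $\mu_n(\cdot\mid\mathbf{x})$; $D(\alpha\mid\mathbf{x})=\{\mathbf{y}:\rho(\mathbf{y}\mid\mathbf{x})\ge\alpha\}$, $D_n(\alpha\mid\mathbf{x})=\{\mathbf{y}:\rho_n(\mathbf{y}\mid\mathbf{x})\ge\alpha\}$. A conditional median $\mathbf{m}(\mathbf{x})$ maximizes $\rho(\cdot\mid\mathbf{x})$. $d_H(A,B)=\inf\{\epsilon:A\subseteq B^\epsilon,B\subseteq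 A^\epsilon\}$ is the Hausdorff distance, $A^\epsilon$ the $\epsilon$-neighborhood of $A$. Conditions: (U) $\sup_{\mathbf{y}}|\rho_n(\mathbf{y}\mid\mathbf{x})-\rho(\mathbf{y}\mid\mathbf{x})|\xrightarrow{P}0$. C(v): $\rho(\cdot\mid\mathbf{x})$ is continuous and $\rho(\mathbf{y}\mid\mathbf{x})\to0$ as $\|\mathbf{y}\|\to\infty$. C(vi): for any $0<\alpha<\rho(\mathbf{m}(\mathbf{x})\mid\mathbf{x})$, the closure of $\{\mathbf{y}:\rho(\mathbf{y}\mid\mathbf{x})>\alpha\}$ equals $D(\alpha\mid\mathbf{x})$. *)

theory Defs
  imports "HOL-Probability.Probability"
begin

definition eps_nbhd :: "'a::metric_space set \<Rightarrow> real \<Rightarrow> 'a set" where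
  "eps_nbhd A e = {y. \<exists>a\<in>A. dist y a \<le> e}"

text \<open>Hausdorff distance d_H(A,B) = inf {e : A within e-nbhd of B, B within e-nbhd of A},
  valued in the extended reals (inf of the empty set is +infinity).\<close>
definition haus_dist :: "'a::metric_space set \<Rightarrow> 'a set \<Rightarrow> ereal" where
  "haus_dist A B = Inf {ereal e | e. e > 0 \<and> A \<subseteq> eps_nbhd B e \<and> B \<subseteq> eps_nbhd A e}"

definition depth_region :: "('a \<Rightarrow> real) \<Rightarrow> real \<Rightarrow> 'a set" where
  "depth_region rho a = {y. rho y \<ge> a}"

definition outer_prob :: "'w measure \<Rightarrow> 'w set \<Rightarrow> real" where
  "outer_prob M S = Inf {measure M A | A. A \<in> sets M \<and> S \<inter> space M \<subseteq> A}"

definition conv_in_prob :: "'w measure \<Rightarrow> (nat \<Rightarrow> 'w \<Rightarrow> 'b::metric_space) \<Rightarrow> ('w \<Rightarrow> 'b) \<Rightarrow> bool" where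
  "conv_in_prob M Z Z0 \<longleftrightarrow>
     (\<forall>e>0. (\<lambda>n. outer_prob M {w \<in> space M. dist (Z n w) (Z0 w) > e}) \<longlonglongrightarrow> 0)"

end

theory Submission
  imports Defs
begin

lemma op_nonneg: "0 \<le> outer_prob M S"
  unfolding outer_prob_def
  by (rule cInf_greatest) (auto intro!: exI[of _ "space M"])

lemma op_mono:
  assumes "S \<subseteq> T"
  shows "outer_prob M S \<le> outer_prob M T"
  unfolding outer_prob_def
  apply (rule cInf_superset_mono)
  subgoal by blast
  subgoal by (rule bdd_belowI[of _ 0]) auto
  using assms by blast

lemma op_union:
  assumes "prob_space M"
  shows "outer_prob M (S \<union> T) \<le> outer_prob M S + outer_prob M T"
proof -
  interpret prob_space M by fact
  have bd: "bdd_below {measure M A |A. A \<in> sets M \<and> X \<inter> space M \<subseteq> A}" for X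
    by (rule bdd_belowI[of _ 0]) auto
  have ne: "{measure M A |A. A \<in> sets M \<and> X \<inter> space M \<subseteq> A} \<noteq> {}" for X
    by (auto intro!: exI[of _ "space M"])
  have key: "outer_prob M (S \<union> T) \<le> measure M A + measure M B"
    if A: "A \<in> sets M" "S \<inter> space M \<subseteq> A" and B: "B \<in> sets M" "T \<inter> space M \<subseteq> B" for A B
  proof -
    have "outer_prob M (S \<union> T) \<le> measure M (A \<union> B)"
      unfolding outer_prob_def using A B by (intro cInf_lower[OF _ bd]) auto
    also have "\<dots> \<le> measure M A + measure M B"
      using A B by (intro measure_subadditive) auto
    finally show ?thesis .
  qed
  have "outer_prob M (S \<union> T) - outer_prob M T \<le> measure M A"
    if A: "A \<in> sets M" "S \<inter> space M \<subseteq> A" for A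
  proof -
    have "outer_prob M (S \<union> T) - measure M A \<le> outer_prob M T"
      unfolding outer_prob_def[of M T]
      apply (rule cInf_greatest[OF ne])
      using key[OF A] by fastforce
    then show ?thesis by simp
  qed
  then have "outer_prob M (S \<union> T) - outer_prob M T \<le> outer_prob M S"
    unfolding outer_prob_def[of M S]
    by (intro cInf_greatest[OF ne]) auto
  then show ?thesis by simp
qed

lemma deterministic:
  fixes rho :: "'a::euclidean_space \<Rightarrow> real"
  assumes median: "\<forall>y. rho y \<le> rho m"
    and Cv_cont: "continuous_on UNIV rho"
    and Cv_tail: "(rho \<longlongrightarrow> 0) at_infinity"
    and Cvi: "\<forall>a. 0 < a \<and> a < rho m \<longrightarrow>
                 closure {y. rho y > a} = depth_region rho a"
    and alpha_range: "0 < alpha" "alpha < rho m"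
    and e: "e > 0"
  shows "\<exists>\<delta>>0. \<forall>rho' alpha'. (\<forall>y. \<bar>rho' y - rho y\<bar> \<le> \<delta>) \<longrightarrow> \<bar>alpha' - alpha\<bar> \<le> \<delta> \<longrightarrow>
            haus_dist (depth_region rho' alpha') (depth_region rho alpha) \<le> ereal e"
proof -
  define D where "D = depth_region rho alpha"
  have Dne: "D \<noteq> {}" using alpha_range by (auto simp: D_def depth_region_def intro!: exI[of _ m])
  have cont: "continuous_on S rho" for S using Cv_cont continuous_on_subset by blast
  have clo: "closed {y. c \<le> rho y}" for c
    using closed_Collect_le[OF continuous_on_const Cv_cont] by simp
  obtain b where b: "\<And>x. b \<le> norm x \<Longrightarrow> \<bar>rho x\<bar> < alpha/2"
  proof -
    have "eventually (\<lambda>x. dist (rho x) 0 < alpha/2) at_infinity"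
      using Cv_tail alpha_range unfolding tendsto_iff by (metis half_gt_zero)
    then show ?thesis using that by (auto simp: eventually_at_infinity)
  qed
  have bnd: "bounded {y. alpha/2 \<le> rho y}"
    unfolding bounded_iff
    by (rule exI[of _ b]) (smt (verit) b mem_Collect_eq)
  have Dclosed: "closed D" using clo by (simp add: D_def depth_region_def)
  have Dbnd: "bounded D"
    using alpha_range by (auto simp: D_def depth_region_def intro: bounded_subset[OF bnd])
  have Dcomp: "compact D" using Dclosed Dbnd compact_eq_bounded_closed by blast
  obtain \<eta> where eta: "\<eta> > 0" "\<eta> \<le> alpha/2"
    and etaP: "\<And>y. alpha - \<eta> \<le> rho y \<Longrightarrow> \<exists>a\<in>D. dist y a \<le> e"
  proof -
    define K where "K = {y. alpha/2 \<le> rho y} \<inter> {z. e \<le> infdist z D}"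
    have Kc: "closed {z. e \<le> infdist z D}"
      by (intro closed_Collect_le continuous_on_const continuous_intros)
    have Kcomp: "compact K" unfolding K_def
      using clo bnd Kc by (meson bounded_Int closed_Int compact_eq_bounded_closed)
    have near: "\<exists>a\<in>D. dist y a \<le> e" if "y \<notin> K" "alpha/2 \<le> rho y" for y
    proof -
      have "infdist y D < e" using that by (auto simp: K_def)
      moreover obtain z where "z \<in> D" "infdist y D = dist y z"
        using infdist_attains_inf[OF Dclosed Dne] by blast
      ultimately show ?thesis by (metis less_eq_real_def)
    qed
    show ?thesis
    proof (cases "K = {}")
      case True
      then show ?thesis using that[of "alpha/2"] near alpha_range by auto
    next
      case False
      obtain x0 where x0: "x0 \<in> K" "\<And>y. y \<in> K \<Longrightarrow> rho y \<le> rho x0"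
        using continuous_attains_sup[OF Kcomp False cont] by blast
      have "rho x0 < alpha"
      proof (rule ccontr)
        assume "\<not> rho x0 < alpha"
        then have "x0 \<in> D" by (auto simp: D_def depth_region_def)
        then show False using x0(1) e by (auto simp: K_def)
      qed
      show ?thesis
      proof (rule that[of "min (alpha/2) ((alpha - rho x0)/2)"])
        fix y assume y: "alpha - min (alpha/2) ((alpha - rho x0)/2) \<le> rho y"
        have "y \<notin> K" proof assume "y \<in> K" then have "rho y \<le> rho x0" by (rule x0(2)) then show False using y alpha_range \<open>rho x0 < alpha\<close> by (auto simp: min_def field_simps split: if_splits) qed
        then show "\<exists>a\<in>D. dist y a \<le> e" using near y by force
      qed (use \<open>rho x0 < alpha\<close> alpha_range in auto)
    qed
  qed
  have cover: "D \<subseteq> (\<Union>z\<in>{z. rho z > alpha}. ball z e)"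
  proof
    fix a assume "a \<in> D"
    then have "a \<in> closure {y. rho y > alpha}" using Cvi alpha_range by (simp add: D_def)
    then obtain z where "rho z > alpha" "dist z a < e"
      using e by (auto simp: closure_approachable)
    then show "a \<in> (\<Union>z\<in>{z. rho z > alpha}. ball z e)" by auto
  qed
  obtain F where F: "F \<subseteq> {z. rho z > alpha}" "finite F" "D \<subseteq> (\<Union>z\<in>F. ball z e)"
    using compactE_image[OF Dcomp _ cover] by blast
  define \<gamma> where "\<gamma> = Min (insert 1 ((\<lambda>z. rho z - alpha) ` F))"
  have gpos: "\<gamma> > 0" unfolding \<gamma>_def using F by (subst Min_gr_iff) auto
  have gle: "\<And>z. z \<in> F \<Longrightarrow> \<gamma> \<le> rho z - alpha" unfolding \<gamma>_def using F by auto
  define \<delta> where "\<delta> = min (\<eta>/2) (\<gamma>/2)"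
  show ?thesis
  proof (intro exI[of _ \<delta>] conjI allI impI)
    show "\<delta> > 0" using eta gpos by (simp add: \<delta>_def)
    fix rho' :: "'a \<Rightarrow> real" and alpha'
    assume r: "\<forall>y. \<bar>rho' y - rho y\<bar> \<le> \<delta>" and al: "\<bar>alpha' - alpha\<bar> \<le> \<delta>"
    have A: "depth_region rho' alpha' \<subseteq> eps_nbhd D e"
    proof
      fix y assume "y \<in> depth_region rho' alpha'"
      then have "alpha' \<le> rho' y" by (simp add: depth_region_def)
      moreover have "rho' y \<le> rho y + \<delta>" using r[rule_format, of y] by (simp add: abs_le_iff)
      moreover have "alpha \<le> alpha' + \<delta>" using al by (simp add: abs_le_iff)
      moreover have "\<delta> \<le> \<eta>/2" by (simp add: \<delta>_def)
      ultimately have "alpha - \<eta> \<le> rho y" by linarith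
      then show "y \<in> eps_nbhd D e" using etaP by (auto simp: eps_nbhd_def)
    qed
    have B: "D \<subseteq> eps_nbhd (depth_region rho' alpha') e"
    proof
      fix a assume "a \<in> D"
      then obtain z where z: "z \<in> F" "dist z a < e" using F(3) by auto
      have "rho z - \<delta> \<le> rho' z" using r[rule_format, of z] by (simp add: abs_le_iff)
      moreover have "alpha' \<le> alpha + \<delta>" using al by (simp add: abs_le_iff)
      moreover have "\<delta> \<le> \<gamma>/2" by (simp add: \<delta>_def)
      moreover have "\<gamma> \<le> rho z - alpha" by (rule gle[OF z(1)])
      moreover have "0 < \<gamma>" by (rule gpos)
      ultimately have "alpha' \<le> rho' z" by linarith
      then show "a \<in> eps_nbhd (depth_region rho' alpha') e"
        using z by (auto simp: eps_nbhd_def depth_region_def dist_commute intro!: bexI[of _ z])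
    qed
    show "haus_dist (depth_region rho' alpha') (depth_region rho alpha) \<le> ereal e"
      unfolding haus_dist_def using A B e D_def by (intro Inf_lower) auto
  qed
qed

theorem lemma6:
  fixes M :: "'w measure"
    and rho :: "'a::euclidean_space \<Rightarrow> real"
    and rho_n :: "nat \<Rightarrow> 'w \<Rightarrow> 'a \<Rightarrow> real"
    and m :: 'a
    and alpha_n :: "nat \<Rightarrow> 'w \<Rightarrow> real"
    and alpha :: real
  assumes "prob_space M"
    and bounded_rho: "bounded (range rho)"
    and median: "\<forall>y. rho y \<le> rho m"
    and Cv_cont: "continuous_on UNIV rho"
    and Cv_tail: "(rho \<longlongrightarrow> 0) at_infinity"
    and Cvi: "\<forall>a. 0 < a \<and> a < rho m \<longrightarrow>
                 closure {y. rho y > a} = depth_region rho a"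
    and U: "\<forall>e>0. (\<lambda>n. outer_prob M
              {w \<in> space M. (SUP y. ereal \<bar>rho_n n w y - rho y\<bar>) > ereal e}) \<longlonglongrightarrow> 0"
    and alpha_range: "0 < alpha" "alpha < rho m"
    and alpha_conv: "conv_in_prob M alpha_n (\<lambda>w. alpha)"
  shows "\<forall>e>0. (\<lambda>n. outer_prob M
           {w \<in> space M. haus_dist (depth_region (rho_n n w) (alpha_n n w))
                                    (depth_region rho alpha) > ereal e}) \<longlonglongrightarrow> 0"
proof (intro allI impI)
  fix e :: real assume e: "e > 0"
  obtain \<delta> where d: "\<delta> > 0" and dP: "\<And>rho' alpha'. (\<forall>y. \<bar>rho' y - rho y\<bar> \<le> \<delta>) \<Longrightarrow> \<bar>alpha' - alpha\<bar> \<le> \<delta> \<Longrightarrow>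
            haus_dist (depth_region rho' alpha') (depth_region rho alpha) \<le> ereal e"
    using deterministic[OF median Cv_cont Cv_tail Cvi alpha_range e] by blast
  define S1 where "S1 n = {w \<in> space M. (SUP y. ereal \<bar>rho_n n w y - rho y\<bar>) > ereal \<delta>}" for n
  define S2 where "S2 n = {w \<in> space M. dist (alpha_n n w) alpha > \<delta>}" for n
  have sub: "{w \<in> space M. haus_dist (depth_region (rho_n n w) (alpha_n n w))
                                    (depth_region rho alpha) > ereal e} \<subseteq> S1 n \<union> S2 n" for n
  proof
    fix w assume w: "w \<in> {w \<in> space M. haus_dist (depth_region (rho_n n w) (alpha_n n w))
                                    (depth_region rho alpha) > ereal e}"
    show "w \<in> S1 n \<union> S2 n"
    proof (rule ccontr)
      assume "w \<notin> S1 n \<union> S2 n"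
      then have h1: "(SUP y. ereal \<bar>rho_n n w y - rho y\<bar>) \<le> ereal \<delta>"
        and h2: "dist (alpha_n n w) alpha \<le> \<delta>" using w by (auto simp: S1_def S2_def not_less)
      have "\<forall>y. \<bar>rho_n n w y - rho y\<bar> \<le> \<delta>"
        using h1 by (auto simp: SUP_le_iff)
      moreover have "\<bar>alpha_n n w - alpha\<bar> \<le> \<delta>" using h2 by (simp add: dist_real_def)
      ultimately have "haus_dist (depth_region (rho_n n w) (alpha_n n w)) (depth_region rho alpha) \<le> ereal e"
        by (rule dP)
      then show False using w by auto
    qed
  qed
  have L1: "(\<lambda>n. outer_prob M (S1 n)) \<longlonglongrightarrow> 0" using U d by (simp add: S1_def)
  have L2: "(\<lambda>n. outer_prob M (S2 n)) \<longlonglongrightarrow> 0" using alpha_conv d by (simp add: S2_def conv_in_prob_def)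
  have L: "(\<lambda>n. outer_prob M (S1 n) + outer_prob M (S2 n)) \<longlonglongrightarrow> 0"
    using tendsto_add[OF L1 L2] by simp
  show "(\<lambda>n. outer_prob M
           {w \<in> space M. haus_dist (depth_region (rho_n n w) (alpha_n n w))
                                    (depth_region rho alpha) > ereal e}) \<longlonglongrightarrow> 0"
  proof (rule tendsto_sandwich[OF _ _ tendsto_const L])
    show "\<forall>\<^sub>F n in sequentially. 0 \<le> outer_prob M {w \<in> space M. haus_dist (depth_region (rho_n n w) (alpha_n n w))
                                    (depth_region rho alpha) > ereal e}"
      by (simp add: op_nonneg)
    show "\<forall>\<^sub>F n in sequentially. outer_prob M {w \<in> space M. haus_dist (depth_region (rho_n n w) (alpha_n n w))
                                    (depth_region rho alpha) > ereal e} \<le> outer_prob M (S1 n) + outer_prob M (S2 n)"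
      using order_trans[OF op_mono[OF sub] op_union[OF assms(1)]] by simp
  qed
qed

end
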